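(* Let $d,j$ be integers with $d\ge 3$ and $d\le j\le \left\lfloor \frac{3(d-1)}{2}\right\rfloor$. Let $\lambda_1,\dots,\lambda_t$ be the elements of $\mathscr{P}_{3,d-1}(j)$ and $\mu_1,\dots,\mu_s$ the elements of $\mathscr{P}_{3,d-1}(j-1)$, and define the $s\times t$ matrix $C=(C_{pq})$ by $E([x^{\lambda_q}])=\sum_{p=1}^{s} C_{pq}[x^{\mu_p}]$. Then $\operatorname{rank} C = s = p_{3,d-1}(j-1)$.
   Context: $\Bbbk$ is an algebraically closed field of characteristic $0$. For an integer $d\ge 1$, $A(d)=\Bbbk[x_1,x_2,x_3]/(x_1^d,x_2^d,x_3^d)=\bigoplus_j A(d)_j$ with its standard grading; the monomials $x_1^{a_1}x_2^{a_2}x_3^{a_3}$ with $0\le a_i\le d-1$ form a basis. The linear map $E:A(d)_{j+1}\to A(d)_j$ is defined on monomials by $E(x_1^{a_1}x_2^{a_2}x_3^{a_3})=\sum_{k=1}^{3} a_k(d-a_k)\,x_1^{a_1}\cdots x_k^{a_k-1}\cdots x_3^{a_3}$ (terms with $a_k=0$ vanish). For integers $l\ge 0$ and $n$, $\mathscr{P}_{3,l}(n)$ is the set of integer triples $(a,b,c)$ with $l\ge a\ge b\ge c\ge 0$, $a+b+c=n$, and $p_{3,l}(n)=|\mathscr{P}_{3,l}(n)|$. For $\lambda=(a,b,c)$, $[x^\lambda]$ denotes the sum of the distinct monomials in the orbit of $x_1^ax_2^bx_3^c$ under the action of $S_3$ permuting the variables. *)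

theory Defs
  imports "Jordan_Normal_Form.DL_Rank" "HOL-Computational_Algebra.Polynomial"
begin

text \<open>Monomials x1^a1 x2^a2 x3^a3 of k[x1,x2,x3] are encoded by exponent triples (a1,a2,a3).
  An element of A(d) is encoded as its coefficient function on exponent triples,
  supported on the basis box d (all exponents at most d-1).\<close>

type_synonym mono3 = "nat \<times> nat \<times> nat"

definition box :: "nat \<Rightarrow> mono3 set" where
  "box d = {(a1, a2, a3). a1 < d \<and> a2 < d \<and> a3 < d}"

text \<open>Coefficient of the monomial with exponents m' in E(x^m), for the basis monomial x^m of A(d):
  E(x^m) = sum over k of m_k (d - m_k) x^(m - e_k), terms with m_k = 0 vanishing.\<close>
definition E_mono :: "nat \<Rightarrow> mono3 \<Rightarrow> mono3 \<Rightarrow> nat" where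
  "E_mono d m m' = (case m of (a1, a2, a3) \<Rightarrow>
      (if a1 \<ge> 1 \<and> m' = (a1 - 1, a2, a3) then a1 * (d - a1) else 0)
    + (if a2 \<ge> 1 \<and> m' = (a1, a2 - 1, a3) then a2 * (d - a2) else 0)
    + (if a3 \<ge> 1 \<and> m' = (a1, a2, a3 - 1) then a3 * (d - a3) else 0))"

definition E_map :: "nat \<Rightarrow> (mono3 \<Rightarrow> 'a::comm_ring_1) \<Rightarrow> mono3 \<Rightarrow> 'a" where
  "E_map d f m' = (\<Sum>m\<in>box d. f m * of_nat (E_mono d m m'))"

definition P3 :: "nat \<Rightarrow> int \<Rightarrow> mono3 set" where
  "P3 l n = {(a, b, c). l \<ge> a \<and> a \<ge> b \<and> b \<ge> c \<and> int (a + b + c) = n}"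

definition p3 :: "nat \<Rightarrow> int \<Rightarrow> nat" where
  "p3 l n = card (P3 l n)"

definition orbit3 :: "mono3 \<Rightarrow> mono3 set" where
  "orbit3 m = (case m of (a, b, c) \<Rightarrow>
     {(a, b, c), (a, c, b), (b, a, c), (b, c, a), (c, a, b), (c, b, a)})"

text \<open>[x^lambda]: the sum of the distinct monomials in the orbit (as a coefficient function).\<close>
definition symm :: "mono3 \<Rightarrow> mono3 \<Rightarrow> 'a::comm_ring_1" where
  "symm lam = (\<lambda>m. if m \<in> orbit3 lam then 1 else 0)"

end

theory Submission
  imports Defs
begin

definition sort3 :: "mono3 \<Rightarrow> mono3" where
 "sort3 m = (case m of (a,b,c) \<Rightarrow> (max a (max b c), a+b+c - max a (max b c) - min a (min b c), min a (min b c)))"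

definition sym3 :: "(mono3 \<Rightarrow> 'a) \<Rightarrow> bool" where
  "sym3 g \<longleftrightarrow> (\<forall>a b c. g (a,b,c) = g (b,a,c) \<and> g (a,b,c) = g (a,c,b))"
definition supp :: "nat \<Rightarrow> nat \<Rightarrow> (mono3 \<Rightarrow> 'a::zero) \<Rightarrow> bool" where
  "supp d n g \<longleftrightarrow> (\<forall>a b c. g (a,b,c) \<noteq> 0 \<longrightarrow> a < d \<and> b < d \<and> c < d \<and> a+b+c = n)"
definition good :: "nat \<Rightarrow> nat \<Rightarrow> (mono3 \<Rightarrow> 'a::zero) \<Rightarrow> bool" where
  "good d n g \<longleftrightarrow> sym3 g \<and> supp d n g"

lemma orbit_sort: "x \<ge> y \<Longrightarrow> y \<ge> z \<Longrightarrow> ((a,b,c) \<in> orbit3 (x,y,z)) = (sort3 (a,b,c) = (x,y,z))"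
  unfolding orbit3_def sort3_def by (auto simp: max_def min_def)

lemma sort3_in: "sort3 (a,b,c) \<in> orbit3 (a,b,c)"
  unfolding orbit3_def sort3_def by (auto simp: max_def min_def)

lemma sym3_sort: assumes "sym3 g" shows "g m = g (sort3 m)"
proof -
  obtain a b c where m: "m = (a,b,c)" by (cases m) auto
  have s1: "\<And>a b c. g (a,b,c) = g (b,a,c)" and s2: "\<And>a b c. g (a,b,c) = g (a,c,b)"
    using assms unfolding sym3_def by auto
  have "\<forall>x \<in> orbit3 (a,b,c). g x = g (a,b,c)"
    unfolding orbit3_def using s1 s2 by auto
  then show ?thesis using sort3_in m by metis
qed

lemma sort3_P3: assumes "supp d n g" "g (a,b,c) \<noteq> 0" shows "sort3 (a,b,c) \<in> P3 (d-1) (int n)"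
proof -
  have "a < d" "b < d" "c < d" "a+b+c = n" using assms unfolding supp_def by auto
  then show ?thesis unfolding sort3_def P3_def by (auto simp: max_def min_def)
qed

lemma sort3_id: "(x,y,z) \<in> P3 l n \<Longrightarrow> sort3 (x,y,z) = (x,y,z)"
  unfolding sort3_def P3_def by (auto simp: max_def min_def)

lemma symm_eval: assumes "lam \<in> P3 l n" shows "symm lam m = (if sort3 m = lam then 1 else 0)"
proof -
  obtain x y z where l: "lam = (x,y,z)" by (cases lam) auto
  obtain a b c where m: "m = (a,b,c)" by (cases m) auto
  have "x \<ge> y" "y \<ge> z" using assms l unfolding P3_def by auto
  then show ?thesis unfolding symm_def l m using orbit_sort by simp
qed

lemma sum_nth_set: "distinct ls \<Longrightarrow> (\<Sum>p<length ls. f (ls!p)) = sum f (set ls)"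
proof -
  assume "distinct ls"
  then have "inj_on (nth ls) {..<length ls}" by (simp add: inj_on_def nth_eq_iff_index_eq)
  moreover have "nth ls ` {..<length ls} = set ls" by (auto simp: in_set_conv_nth)
  ultimately show ?thesis using sum.reindex[of "nth ls" "{..<length ls}" f] by simp
qed

lemma decomp:
  fixes g :: "mono3 \<Rightarrow> 'a::comm_ring_1"
  assumes "good d n g" "distinct ls" "set ls = P3 (d-1) (int n)"
  shows "g m = (\<Sum>p<length ls. g (ls!p) * symm (ls!p) m)"
proof -
  have "(\<Sum>p<length ls. g (ls!p) * symm (ls!p) m) = (\<Sum>lam\<in>set ls. g lam * symm lam m)"
    using sum_nth_set[OF assms(2)] by simp
  also have "\<dots> = (\<Sum>lam\<in>set ls. if lam = sort3 m then g (sort3 m) else 0)"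
    by (rule sum.cong) (auto simp: symm_eval assms(3))
  also have "\<dots> = (if sort3 m \<in> set ls then g (sort3 m) else 0)"
    by (simp add: sum.delta')
  also have "\<dots> = g m"
  proof (cases "g m = 0")
    case True
    then show ?thesis using sym3_sort[of g m] assms(1) good_def by auto
  next
    case False
    obtain a b c where m: "m = (a,b,c)" by (cases m) auto
    have "sort3 m \<in> set ls" using sort3_P3[of d n g a b c] assms False m good_def by auto
    then show ?thesis using sym3_sort[of g m] assms(1) good_def by (metis (full_types))
  qed
  finally show ?thesis by simp
qed

lemma eval_nth:
  fixes c :: "nat \<Rightarrow> 'a::comm_ring_1"
  assumes "distinct ls" "set ls \<subseteq> P3 l n" "p' < length ls"
  shows "(\<Sum>p<length ls. c p * symm (ls!p) (ls!p')) = c p'"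
proof -
  have P: "ls!p' \<in> P3 l n" using assms by auto
  obtain x y z where e: "ls!p' = (x,y,z)" by (cases "ls!p'") auto
  have "(\<Sum>p<length ls. c p * symm (ls!p) (ls!p')) = (\<Sum>p<length ls. if p = p' then c p else 0)"
  proof (rule sum.cong)
    fix p assume "p \<in> {..<length ls}"
    then have "ls!p \<in> P3 l n" using assms by auto
    then have "symm (ls!p) (ls!p') = (if ls!p' = ls!p then 1 else (0::'a))"
      using symm_eval[of "ls!p" l n "ls!p'"] sort3_id[of x y z l n] P e by auto
    then show "c p * symm (ls!p) (ls!p') = (if p = p' then c p else 0)"
      using \<open>p \<in> _\<close> assms nth_eq_iff_index_eq[of ls p p'] by auto
  qed simp
  also have "\<dots> = c p'" using assms(3) by (simp add: sum.delta)
  finally show ?thesis .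
qed

lemma good_symm: assumes "lam \<in> P3 (d-1) (int n)" "d \<ge> 1" shows "good d n (symm lam)"
proof -
  obtain x y z where l: "lam = (x,y,z)" by (cases lam) auto
  have "sym3 (symm lam)" unfolding sym3_def symm_eval[OF assms(1)] sort3_def
    by (auto simp: max_def min_def)
  moreover have "supp d n (symm lam)" unfolding supp_def symm_eval[OF assms(1)]
    using assms l unfolding sort3_def P3_def by (auto simp: max_def min_def split: if_splits)
  ultimately show ?thesis by (simp add: good_def)
qed

lemma good_lin:
  fixes g :: "nat \<Rightarrow> mono3 \<Rightarrow> 'a::comm_ring_1"
  assumes "\<And>q. q \<in> A \<Longrightarrow> good d n (g q)"
  shows "good d n (\<lambda>m. \<Sum>q\<in>A. c q * g q m)"
proof -
  have "sym3 (\<lambda>m. \<Sum>q\<in>A. c q * g q m)" using assms unfolding good_def sym3_def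
    by (metis (no_types, lifting) sum.cong)
  moreover have "supp d n (\<lambda>m. \<Sum>q\<in>A. c q * g q m)" unfolding supp_def
  proof (intro allI impI)
    fix a b c' assume "(\<Sum>q\<in>A. c q * g q (a,b,c')) \<noteq> 0"
    then obtain q where "q \<in> A" "g q (a,b,c') \<noteq> 0" by (metis (no_types, lifting) mult_zero_right sum.neutral)
    then show "a < d \<and> b < d \<and> c' < d \<and> a + b + c' = n" using assms unfolding good_def supp_def by blast
  qed
  ultimately show ?thesis by (simp add: good_def)
qed
definition cc :: "nat \<Rightarrow> nat \<Rightarrow> nat" where "cc d x = x * (d - x)"

lemma cc_ge: "d \<le> x \<Longrightarrow> cc d x = 0" by (simp add: cc_def)

lemma box_eq: "box d = {..<d} \<times> {..<d} \<times> {..<d}"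
  unfolding box_def by auto

lemma finite_box[simp]: "finite (box d)" by (simp add: box_eq)

lemma E_mono_alt: "E_mono d m (a,b,c) = (if m = (a+1,b,c) then cc d (a+1) else 0)
   + (if m = (a,b+1,c) then cc d (b+1) else 0) + (if m = (a,b,c+1) then cc d (c+1) else 0)"
  by (cases m) (auto simp: E_mono_def cc_def)

lemma E_explicit: "E_map d f (a,b,c) = (if a<d \<and> b<d \<and> c<d then
    f (a+1,b,c) * of_nat (cc d (a+1)) + f (a,b+1,c) * of_nat (cc d (b+1)) + f (a,b,c+1) * of_nat (cc d (c+1)) else 0)"
proof -
  have "E_map d f (a,b,c) = (\<Sum>m\<in>box d. (if m = (a+1,b,c) then f (a+1,b,c) * of_nat (cc d (a+1)) else 0)
     + (if m = (a,b+1,c) then f (a,b+1,c) * of_nat (cc d (b+1)) else 0)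
     + (if m = (a,b,c+1) then f (a,b,c+1) * of_nat (cc d (c+1)) else 0))"
    unfolding E_map_def by (rule sum.cong) (auto simp: E_mono_alt algebra_simps)
  also have "\<dots> = (if (a+1,b,c) \<in> box d then f (a+1,b,c) * of_nat (cc d (a+1)) else 0)
     + (if (a,b+1,c) \<in> box d then f (a,b+1,c) * of_nat (cc d (b+1)) else 0)
     + (if (a,b,c+1) \<in> box d then f (a,b,c+1) * of_nat (cc d (c+1)) else 0)"
    by (simp add: sum.distrib sum.delta')
  also have "\<dots> = (if a<d \<and> b<d \<and> c<d then
    f (a+1,b,c) * of_nat (cc d (a+1)) + f (a,b+1,c) * of_nat (cc d (b+1)) + f (a,b,c+1) * of_nat (cc d (c+1)) else 0)"
    by (auto simp: box_def cc_ge)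
  finally show ?thesis .
qed

definition F_map :: "nat \<Rightarrow> (mono3 \<Rightarrow> 'a::comm_ring_1) \<Rightarrow> mono3 \<Rightarrow> 'a" where
  "F_map d g m = (case m of (a,b,c) \<Rightarrow> if a<d \<and> b<d \<and> c<d then
     (if 1 \<le> a then g (a-1,b,c) else 0) + (if 1 \<le> b then g (a,b-1,c) else 0) + (if 1 \<le> c then g (a,b,c-1) else 0) else 0)"

lemma E_lin: "E_map d (\<lambda>m. \<Sum>q\<in>A. c q * h q m) m' = (\<Sum>q\<in>A. c q * E_map d (h q) m')"
  unfolding E_map_def by (simp add: sum_distrib_right sum_distrib_left mult.assoc sum.swap[of _ A])

lemma F_lin: "F_map d (\<lambda>m. \<Sum>q\<in>A. c q * h q m) m' = (\<Sum>q\<in>A. c q * F_map d (h q) m')"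
proof (cases m')
  case (fields a b c')
  show ?thesis unfolding fields
    by (cases "a<d \<and> b<d \<and> c'<d"; cases "1 \<le> a"; cases "1 \<le> b"; cases "1 \<le> c'"; auto simp: F_map_def sum.distrib distrib_left)
qed

lemma E_of_int: "E_map d (\<lambda>m. of_int (f m)) m' = of_int (E_map d f m')"
  unfolding E_map_def by simp

lemma F_of_int: "F_map d (\<lambda>m. of_int (f m)) m' = of_int (F_map d f m')"
  by (cases m') (simp add: F_map_def)

lemma symm_of_int: "symm lam m = of_int (symm lam m)"
  by (simp add: symm_def)

lemma good_E: assumes "good d (Suc n) g" shows "good d n (E_map d g)"
proof -
  have s1: "\<And>a b c. g (a,b,c) = g (b,a,c)" and s2: "\<And>a b c. g (a,b,c) = g (a,c,b)"
    and sp: "\<And>a b c. g (a,b,c) \<noteq> 0 \<Longrightarrow> a < d \<and> b < d \<and> c < d \<and> a+b+c = Suc n"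
    using assms unfolding good_def sym3_def supp_def by auto
  have "sym3 (E_map d g)" unfolding sym3_def E_explicit
  proof (intro allI conjI)
    fix a b c
    show "(if a < d \<and> b < d \<and> c < d then g (a + 1, b, c) * of_nat (cc d (a + 1)) + g (a, b + 1, c) * of_nat (cc d (b + 1)) + g (a, b, c + 1) * of_nat (cc d (c + 1)) else 0) =
       (if b < d \<and> a < d \<and> c < d then g (b + 1, a, c) * of_nat (cc d (b + 1)) + g (b, a + 1, c) * of_nat (cc d (a + 1)) + g (b, a, c + 1) * of_nat (cc d (c + 1)) else 0)"
      using s1[of "a+1" b c] s1[of a "b+1" c] s1[of a b "c+1"] by (simp add: algebra_simps)
    show "(if a < d \<and> b < d \<and> c < d then g (a + 1, b, c) * of_nat (cc d (a + 1)) + g (a, b + 1, c) * of_nat (cc d (b + 1)) + g (a, b, c + 1) * of_nat (cc d (c + 1)) else 0) =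
       (if a < d \<and> c < d \<and> b < d then g (a + 1, c, b) * of_nat (cc d (a + 1)) + g (a, c + 1, b) * of_nat (cc d (c + 1)) + g (a, c, b + 1) * of_nat (cc d (b + 1)) else 0)"
      using s2[of "a+1" b c] s2[of a "b+1" c] s2[of a b "c+1"] by (simp add: algebra_simps)
  qed
  moreover have "supp d n (E_map d g)" unfolding supp_def E_explicit
  proof (intro allI impI)
    fix a b c
    assume h: "(if a < d \<and> b < d \<and> c < d then g (a + 1, b, c) * of_nat (cc d (a + 1)) + g (a, b + 1, c) * of_nat (cc d (b + 1)) + g (a, b, c + 1) * of_nat (cc d (c + 1)) else 0) \<noteq> 0"
    then have "a < d \<and> b < d \<and> c < d" by (auto split: if_splits)
    moreover have "g (a + 1, b, c) \<noteq> 0 \<or> g (a, b + 1, c) \<noteq> 0 \<or> g (a, b, c + 1) \<noteq> 0"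
      using h by (auto split: if_splits)
    then have "a+b+c = n" using sp by fastforce
    ultimately show "a < d \<and> b < d \<and> c < d \<and> a + b + c = n" by simp
  qed
  ultimately show ?thesis by (simp add: good_def)
qed

lemma good_F: assumes "good d n g" shows "good d (Suc n) (F_map d g)"
proof -
  have s1: "\<And>a b c. g (a,b,c) = g (b,a,c)" and s2: "\<And>a b c. g (a,b,c) = g (a,c,b)"
    and sp: "\<And>a b c. g (a,b,c) \<noteq> 0 \<Longrightarrow> a < d \<and> b < d \<and> c < d \<and> a+b+c = n"
    using assms unfolding good_def sym3_def supp_def by auto
  have "sym3 (F_map d g)" unfolding sym3_def F_map_def
  proof (intro allI conjI)
    fix a b c
    show "(case (a, b, c) of (a, b, c) \<Rightarrow> if a < d \<and> b < d \<and> c < d then (if 1 \<le> a then g (a - 1, b, c) else 0) + (if 1 \<le> b then g (a, b - 1, c) else 0) + (if 1 \<le> c then g (a, b, c - 1) else 0) else 0) =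
       (case (b, a, c) of (a, b, c) \<Rightarrow> if a < d \<and> b < d \<and> c < d then (if 1 \<le> a then g (a - 1, b, c) else 0) + (if 1 \<le> b then g (a, b - 1, c) else 0) + (if 1 \<le> c then g (a, b, c - 1) else 0) else 0)"
      using s1[of "a-1" b c] s1[of a "b-1" c] s1[of a b "c-1"] by (simp add: algebra_simps)
    show "(case (a, b, c) of (a, b, c) \<Rightarrow> if a < d \<and> b < d \<and> c < d then (if 1 \<le> a then g (a - 1, b, c) else 0) + (if 1 \<le> b then g (a, b - 1, c) else 0) + (if 1 \<le> c then g (a, b, c - 1) else 0) else 0) =
       (case (a, c, b) of (a, b, c) \<Rightarrow> if a < d \<and> b < d \<and> c < d then (if 1 \<le> a then g (a - 1, b, c) else 0) + (if 1 \<le> b then g (a, b - 1, c) else 0) + (if 1 \<le> c then g (a, b, c - 1) else 0) else 0)"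
      using s2[of "a-1" b c] s2[of a "b-1" c] s2[of a b "c-1"] by (simp add: algebra_simps)
  qed
  moreover have "supp d (Suc n) (F_map d g)" unfolding supp_def F_map_def
  proof (intro allI impI)
    fix a b c
    assume h: "(case (a, b, c) of (a, b, c) \<Rightarrow> if a < d \<and> b < d \<and> c < d then (if 1 \<le> a then g (a - 1, b, c) else 0) + (if 1 \<le> b then g (a, b - 1, c) else 0) + (if 1 \<le> c then g (a, b, c - 1) else 0) else 0) \<noteq> 0"
    then have "a < d \<and> b < d \<and> c < d" by (auto split: if_splits)
    moreover have "(1 \<le> a \<and> g (a - 1, b, c) \<noteq> 0) \<or> (1 \<le> b \<and> g (a, b - 1, c) \<noteq> 0) \<or> (1 \<le> c \<and> g (a, b, c - 1) \<noteq> 0)"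
      using h by (auto split: if_splits)
    then have "a+b+c = Suc n" using sp by fastforce
    ultimately show "a < d \<and> b < d \<and> c < d \<and> a + b + c = Suc n" by simp
  qed
  ultimately show ?thesis by (simp add: good_def)
qed


definition w :: "nat \<Rightarrow> nat \<Rightarrow> real" where "w d a = (\<Prod>i\<in>{1..a}. real (cc d i))"
definition WW :: "nat \<Rightarrow> mono3 \<Rightarrow> real" where "WW d m = (case m of (a,b,c) \<Rightarrow> w d a * w d b * w d c)"

lemma w_Suc: "w d (Suc a) = real (cc d (Suc a)) * w d a"
  unfolding w_def by (simp add: prod.nat_ivl_Suc' mult.commute)

lemma w_pos: "a < d \<Longrightarrow> w d a > 0"
  unfolding w_def by (intro prod_pos) (auto simp: cc_def)

lemma cc_real: "x \<le> d \<Longrightarrow> real (cc d x) = real x * (real d - real x)"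
  by (simp add: cc_def of_nat_diff)

lemma shift1:
  fixes u v :: "nat \<Rightarrow> real"
  shows "(\<Sum>a<d. u (a+1) * real (cc d (a+1)) * v a * w d a) = (\<Sum>a<d. u a * (if 1 \<le> a then v (a-1) else 0) * w d a)"
proof (cases d)
  case 0 then show ?thesis by simp
next
  case (Suc e)
  have "(\<Sum>a<d. u (a+1) * real (cc d (a+1)) * v a * w d a) = (\<Sum>a<e. u (a+1) * real (cc d (a+1)) * v a * w d a)"
    using Suc by (simp add: cc_ge)
  also have "\<dots> = (\<Sum>a<e. u (Suc a) * (if 1 \<le> Suc a then v (Suc a - 1) else 0) * w d (Suc a))"
    by (rule sum.cong) (auto simp: w_Suc)
  also have "\<dots> = (\<Sum>a<d. u a * (if 1 \<le> a then v (a-1) else 0) * w d a)"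
    unfolding Suc by (subst sum.lessThan_Suc_shift) simp
  finally show ?thesis .
qed

lemma sum_box: "(\<Sum>m\<in>box d. f m) = (\<Sum>a<d. \<Sum>b<d. \<Sum>c<d. f (a,b,c))"
  unfolding box_eq by (simp add: sum.cartesian_product)

definition ip :: "nat \<Rightarrow> (mono3 \<Rightarrow> real) \<Rightarrow> (mono3 \<Rightarrow> real) \<Rightarrow> real" where
  "ip d f g = (\<Sum>m\<in>box d. f m * g m * WW d m)"

lemma swap_a: "(\<Sum>a<(d::nat). \<Sum>b<d. \<Sum>c<d. (\<phi> a b c :: real)) = (\<Sum>b<d. \<Sum>c<d. \<Sum>a<d. \<phi> a b c)"
proof -
  have "(\<Sum>a<d. \<Sum>b<d. \<Sum>c<d. \<phi> a b c) = (\<Sum>b<d. \<Sum>a<d. \<Sum>c<d. \<phi> a b c)" by (rule sum.swap)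
  also have "\<dots> = (\<Sum>b<d. \<Sum>c<d. \<Sum>a<d. \<phi> a b c)" by (rule sum.cong[OF refl], rule sum.swap)
  finally show ?thesis .
qed

lemma swap_b: "(\<Sum>a<(d::nat). \<Sum>b<d. \<Sum>c<d. (\<phi> a b c :: real)) = (\<Sum>a<d. \<Sum>c<d. \<Sum>b<d. \<phi> a b c)"
  by (rule sum.cong[OF refl], rule sum.swap)

lemma inner1: "(\<Sum>a<d. f (a+1,b,c) * real (cc d (a+1)) * g (a,b,c) * WW d (a,b,c))
   = (\<Sum>a<d. f (a,b,c) * (if 1 \<le> a then g (a-1,b,c) else 0) * WW d (a,b,c))"
proof -
  have "(\<Sum>a<d. f (a+1,b,c) * real (cc d (a+1)) * g (a,b,c) * w d a) * (w d b * w d c)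
      = (\<Sum>a<d. f (a,b,c) * (if 1 \<le> a then g (a-1,b,c) else 0) * w d a) * (w d b * w d c)"
    using shift1[of "\<lambda>a. f (a,b,c)" d "\<lambda>a. g (a,b,c)"] by simp
  then show ?thesis unfolding sum_distrib_right WW_def by (simp add: mult.assoc)
qed

lemma inner2: "(\<Sum>b<d. f (a,b+1,c) * real (cc d (b+1)) * g (a,b,c) * WW d (a,b,c))
   = (\<Sum>b<d. f (a,b,c) * (if 1 \<le> b then g (a,b-1,c) else 0) * WW d (a,b,c))"
proof -
  have "(\<Sum>b<d. f (a,b+1,c) * real (cc d (b+1)) * g (a,b,c) * w d b) * (w d a * w d c)
      = (\<Sum>b<d. f (a,b,c) * (if 1 \<le> b then g (a,b-1,c) else 0) * w d b) * (w d a * w d c)"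
    using shift1[of "\<lambda>b. f (a,b,c)" d "\<lambda>b. g (a,b,c)"] by simp
  then show ?thesis unfolding sum_distrib_right WW_def by (simp add: mult_ac)
qed

lemma inner3: "(\<Sum>c<d. f (a,b,c+1) * real (cc d (c+1)) * g (a,b,c) * WW d (a,b,c))
   = (\<Sum>c<d. f (a,b,c) * (if 1 \<le> c then g (a,b,c-1) else 0) * WW d (a,b,c))"
proof -
  have "(\<Sum>c<d. f (a,b,c+1) * real (cc d (c+1)) * g (a,b,c) * w d c) * (w d a * w d b)
      = (\<Sum>c<d. f (a,b,c) * (if 1 \<le> c then g (a,b,c-1) else 0) * w d c) * (w d a * w d b)"
    using shift1[of "\<lambda>c. f (a,b,c)" d "\<lambda>c. g (a,b,c)"] by simp
  then show ?thesis unfolding sum_distrib_right WW_def by (simp add: mult_ac)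
qed

lemma adjoint: "ip d (E_map d f) g = ip d f (F_map d g)"
proof -
  define L1 where "L1 = (\<Sum>a<d. \<Sum>b<d. \<Sum>c<d. f (a+1,b,c) * real (cc d (a+1)) * g (a,b,c) * WW d (a,b,c))"
  define L2 where "L2 = (\<Sum>a<d. \<Sum>b<d. \<Sum>c<d. f (a,b+1,c) * real (cc d (b+1)) * g (a,b,c) * WW d (a,b,c))"
  define L3 where "L3 = (\<Sum>a<d. \<Sum>b<d. \<Sum>c<d. f (a,b,c+1) * real (cc d (c+1)) * g (a,b,c) * WW d (a,b,c))"
  define R1 where "R1 = (\<Sum>a<d. \<Sum>b<d. \<Sum>c<d. f (a,b,c) * (if 1 \<le> a then g (a-1,b,c) else 0) * WW d (a,b,c))"
  define R2 where "R2 = (\<Sum>a<d. \<Sum>b<d. \<Sum>c<d. f (a,b,c) * (if 1 \<le> b then g (a,b-1,c) else 0) * WW d (a,b,c))"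
  define R3 where "R3 = (\<Sum>a<d. \<Sum>b<d. \<Sum>c<d. f (a,b,c) * (if 1 \<le> c then g (a,b,c-1) else 0) * WW d (a,b,c))"
  have l: "ip d (E_map d f) g = L1 + L2 + L3"
    unfolding ip_def sum_box L1_def L2_def L3_def sum.distrib[symmetric]
    by (intro sum.cong refl) (simp add: E_explicit algebra_simps)
  have r: "ip d f (F_map d g) = R1 + R2 + R3"
    unfolding ip_def sum_box R1_def R2_def R3_def sum.distrib[symmetric]
    by (intro sum.cong refl) (simp add: F_map_def algebra_simps)
  have 1: "L1 = R1"
  proof -
    have "L1 = (\<Sum>b<d. \<Sum>c<d. \<Sum>a<d. f (a+1,b,c) * real (cc d (a+1)) * g (a,b,c) * WW d (a,b,c))" unfolding L1_def by (rule swap_a)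
    also have "\<dots> = (\<Sum>b<d. \<Sum>c<d. \<Sum>a<d. f (a,b,c) * (if 1 \<le> a then g (a-1,b,c) else 0) * WW d (a,b,c))" by (simp only: inner1)
    also have "\<dots> = R1" unfolding R1_def by (rule swap_a[symmetric])
    finally show ?thesis .
  qed
  have 2: "L2 = R2"
  proof -
    have "L2 = (\<Sum>a<d. \<Sum>c<d. \<Sum>b<d. f (a,b+1,c) * real (cc d (b+1)) * g (a,b,c) * WW d (a,b,c))" unfolding L2_def by (rule swap_b)
    also have "\<dots> = (\<Sum>a<d. \<Sum>c<d. \<Sum>b<d. f (a,b,c) * (if 1 \<le> b then g (a,b-1,c) else 0) * WW d (a,b,c))" by (simp only: inner2)
    also have "\<dots> = R2" unfolding R2_def by (rule swap_b[symmetric])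
    finally show ?thesis .
  qed
  have 3: "L3 = R3" unfolding L3_def R3_def by (simp only: inner3)
  show ?thesis using l r 1 2 3 by simp
qed

lemma EF_form:
  fixes g :: "mono3 \<Rightarrow> real"
  assumes "a < d" "b < d" "c < d"
  shows "E_map d (F_map d g) (a,b,c) =
     real (cc d (a+1)) * (g (a,b,c) + (if 1 \<le> b then g (a+1,b-1,c) else 0) + (if 1 \<le> c then g (a+1,b,c-1) else 0))
   + real (cc d (b+1)) * ((if 1 \<le> a then g (a-1,b+1,c) else 0) + g (a,b,c) + (if 1 \<le> c then g (a,b+1,c-1) else 0))
   + real (cc d (c+1)) * ((if 1 \<le> a then g (a-1,b,c+1) else 0) + (if 1 \<le> b then g (a,b-1,c+1) else 0) + g (a,b,c))"
  using assms
  by (cases "Suc a < d"; cases "Suc b < d"; cases "Suc c < d"; simp add: E_explicit F_map_def cc_ge algebra_simps)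

lemma FE_form:
  fixes g :: "mono3 \<Rightarrow> real"
  assumes "a < d" "b < d" "c < d"
  shows "F_map d (E_map d g) (a,b,c) =
     (if 1 \<le> a then g (a,b,c) * real (cc d a) + g (a-1,b+1,c) * real (cc d (b+1)) + g (a-1,b,c+1) * real (cc d (c+1)) else 0)
   + (if 1 \<le> b then g (a+1,b-1,c) * real (cc d (a+1)) + g (a,b,c) * real (cc d b) + g (a,b-1,c+1) * real (cc d (c+1)) else 0)
   + (if 1 \<le> c then g (a+1,b,c-1) * real (cc d (a+1)) + g (a,b+1,c-1) * real (cc d (b+1)) + g (a,b,c) * real (cc d c) else 0)"
  using assms
  by (cases a; cases b; cases c; simp add: E_explicit F_map_def)

lemma comm_alg:
  fixes g0 X1 X2 X3 X4 X5 X6 c1 c2 c3 a0 b0 e0 H :: real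
  assumes "H = c1 + c2 + c3 - a0 - b0 - e0"
  shows "c1 * (g0 + X1 + X2) + c2 * (X3 + g0 + X4) + c3 * (X5 + X6 + g0)
     = (g0 * a0 + X3 * c2 + X5 * c3) + (X1 * c1 + g0 * b0 + X6 * c3) + (X2 * c1 + X4 * c2 + g0 * e0) + H * g0"
  unfolding assms by (simp add: algebra_simps)

lemma FE_form2:
  fixes g :: "mono3 \<Rightarrow> real"
  assumes "a < d" "b < d" "c < d"
  shows "F_map d (E_map d g) (a,b,c) =
     (g (a,b,c) * real (cc d a) + (if 1 \<le> a then g (a-1,b+1,c) else 0) * real (cc d (b+1)) + (if 1 \<le> a then g (a-1,b,c+1) else 0) * real (cc d (c+1)))
   + ((if 1 \<le> b then g (a+1,b-1,c) else 0) * real (cc d (a+1)) + g (a,b,c) * real (cc d b) + (if 1 \<le> b then g (a,b-1,c+1) else 0) * real (cc d (c+1)))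
   + ((if 1 \<le> c then g (a+1,b,c-1) else 0) * real (cc d (a+1)) + (if 1 \<le> c then g (a,b+1,c-1) else 0) * real (cc d (b+1)) + g (a,b,c) * real (cc d c))"
  unfolding FE_form[OF assms] by (cases a; cases b; cases c; simp add: cc_def)

lemma commutator:
  fixes g :: "mono3 \<Rightarrow> real"
  assumes "a < d" "b < d" "c < d"
  shows "E_map d (F_map d g) (a,b,c) = F_map d (E_map d g) (a,b,c) + (3 * (real d - 1) - 2 * real (a+b+c)) * g (a,b,c)"
proof -
  have H: "3 * (real d - 1) - 2 * real (a+b+c) = real (cc d (a+1)) + real (cc d (b+1)) + real (cc d (c+1)) - real (cc d a) - real (cc d b) - real (cc d c)"
    using assms by (simp add: cc_real algebra_simps)
  show ?thesis unfolding EF_form[OF assms] FE_form2[OF assms]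
    by (rule comm_alg[OF H])
qed



lemma WW_pos: "m \<in> box d \<Longrightarrow> WW d m > 0"
  by (cases m) (auto simp: WW_def box_def w_pos)

lemma key:
  fixes g :: "mono3 \<Rightarrow> real"
  assumes sp: "supp d k g" and hk: "2*k < 3*(d-1)" and z: "\<And>m. E_map d (F_map d g) m = 0"
  shows "g m = 0"
proof -
  define h where "h = 3 * (real d - 1) - 2 * real k"
  have hpos: "h > 0" using hk unfolding h_def by (cases d) auto
  have pt: "0 = F_map d (E_map d g) m * g m * WW d m + h * (g m * g m * WW d m)" if "m \<in> box d" for m
  proof -
    obtain a b c where m: "m = (a,b,c)" by (cases m) auto
    have abc: "a < d" "b < d" "c < d" using that m by (auto simp: box_def)
    have "(3 * (real d - 1) - 2 * real (a+b+c)) * g m = h * g m"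
    proof (cases "g m = 0")
      case False
      then have "a+b+c = k" using sp m unfolding supp_def by auto
      then show ?thesis unfolding h_def by simp
    qed simp
    then have "E_map d (F_map d g) m = F_map d (E_map d g) m + h * g m"
      using commutator[OF abc, of g] m by simp
    then have "F_map d (E_map d g) m = - (h * g m)" using z[of m] by simp
    then show ?thesis by (simp add: algebra_simps)
  qed
  have "0 = (\<Sum>m\<in>box d. F_map d (E_map d g) m * g m * WW d m + h * (g m * g m * WW d m))"
    using pt by (simp add: sum.neutral)
  also have "\<dots> = ip d (F_map d (E_map d g)) g + h * (\<Sum>m\<in>box d. g m * g m * WW d m)"
    unfolding ip_def by (simp add: sum.distrib sum_distrib_left)
  also have "ip d (F_map d (E_map d g)) g = ip d g (F_map d (E_map d g))"
    unfolding ip_def by (simp add: mult.commute mult.left_commute)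
  also have "\<dots> = ip d (E_map d g) (E_map d g)"
    by (rule adjoint[symmetric])
  finally have eq: "0 = ip d (E_map d g) (E_map d g) + h * (\<Sum>m\<in>box d. g m * g m * WW d m)" .
  have n1: "ip d (E_map d g) (E_map d g) \<ge> 0"
    unfolding ip_def by (intro sum_nonneg) (simp add: WW_pos less_imp_le)
  have n2: "(\<Sum>m\<in>box d. g m * g m * WW d m) \<ge> 0"
    by (intro sum_nonneg) (simp add: WW_pos less_imp_le)
  have "h * (\<Sum>m\<in>box d. g m * g m * WW d m) \<le> 0" using eq n1 by linarith
  then have s0: "(\<Sum>m\<in>box d. g m * g m * WW d m) = 0"
    using n2 hpos by (simp add: mult_le_0_iff)
  show ?thesis
  proof (cases "m \<in> box d")
    case True
    have "g m * g m * WW d m = 0"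
      using s0 sum_nonneg_eq_0_iff[of "box d" "\<lambda>m. g m * g m * WW d m"] True
      by (simp add: WW_pos less_imp_le)
    then show ?thesis using WW_pos[OF True] by simp
  next
    case False
    then show ?thesis using sp unfolding supp_def box_def by (cases m) auto
  qed
qed



lemma (in vec_space) mult_in_span:
  assumes A: "A \<in> carrier_mat n nc" and x: "x \<in> carrier_vec nc"
  shows "A *\<^sub>v x \<in> span (set (cols A))"
proof -
  have sc: "set (cols A) \<subseteq> carrier_vec n" using A cols_dim by blast
  have v: "vec (length (cols A)) (\<lambda>i. x $ i) = x" using A x by (intro eq_vecI) auto
  have "A *\<^sub>v x = mat_of_cols n (cols A) *\<^sub>v vec (length (cols A)) (\<lambda>i. x $ i)"
    unfolding v using A mat_of_cols_cols[of A] by (simp add: carrier_matD)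
  also have "\<dots> = lincomb_list (\<lambda>i. x $ i) (cols A)"
    by (rule lincomb_list_as_mat_mult[symmetric]) (use sc in auto)
  also have "\<dots> \<in> span_list (cols A)"
    by (rule in_span_listI) auto
  finally show ?thesis using span_list_as_span[OF sc] by simp
qed

lemma (in vec_space) rank_full:
  assumes C: "C \<in> carrier_mat n t" and G: "G \<in> carrier_mat t n" and dt: "det (C * G) \<noteq> 0"
  shows "rank C = n"
proof -
  have CG: "C * G \<in> carrier_mat n n" using C G by simp
  have "C * G \<in> Units (ring_mat TYPE('a) n ())" by (rule det_non_zero_imp_unit[OF CG dt])
  then obtain B where B: "B \<in> carrier_mat n n" and MB: "(C * G) * B = 1\<^sub>m n"
    unfolding Units_def by (auto simp: ring_mat_simps)
  have sc: "set (cols C) \<subseteq> carrier_vec n" using C cols_dim by blast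
  have "span (set (cols C)) = carrier_vec n"
  proof
    show "span (set (cols C)) \<subseteq> carrier_vec n"
      using span_is_submodule[OF sc] unfolding submodule_def by auto
    show "carrier_vec n \<subseteq> span (set (cols C))"
    proof
      fix y :: "'a vec" assume y: "y \<in> carrier_vec n"
      have "y = ((C * G) * B) *\<^sub>v y" using MB y by simp
      also have "\<dots> = (C * (G * B)) *\<^sub>v y" using C G B by (simp add: assoc_mult_mat)
      also have "\<dots> = C *\<^sub>v ((G * B) *\<^sub>v y)" using C G B y by (intro assoc_mult_mat_vec) auto
      also have "\<dots> = C *\<^sub>v (G *\<^sub>v (B *\<^sub>v y))" using C G B y by (subst assoc_mult_mat_vec) auto
      also have "\<dots> \<in> span (set (cols C))"
        by (rule mult_in_span[OF C]) (use G B y in auto)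
      finally show "y \<in> span (set (cols C))" .
    qed
  qed
  then have "span_vs (set (cols C)) = V" by simp
  then show ?thesis unfolding rank_def using dim_is_n by simp
qed



definition Cmat :: "nat \<Rightarrow> mono3 list \<Rightarrow> mono3 list \<Rightarrow> 'b::comm_ring_1 mat" where
  "Cmat d lams mus = mat (length mus) (length lams) (\<lambda>(p,q). E_map d (symm (lams!q)) (mus!p))"
definition Gmat :: "nat \<Rightarrow> mono3 list \<Rightarrow> mono3 list \<Rightarrow> 'b::comm_ring_1 mat" where
  "Gmat d lams mus = mat (length lams) (length mus) (\<lambda>(q,p). F_map d (symm (mus!p)) (lams!q))"
definition Mmat :: "nat \<Rightarrow> mono3 list \<Rightarrow> 'b::comm_ring_1 mat" where
  "Mmat d mus = mat (length mus) (length mus) (\<lambda>(p',p). E_map d (F_map d (symm (mus!p))) (mus!p'))"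

locale setup3 =
  fixes d n :: nat and lams mus :: "mono3 list"
  assumes d1: "d \<ge> 1"
    and dl: "distinct lams" and sl: "set lams = P3 (d-1) (int (Suc n))"
    and dm: "distinct mus" and sm: "set mus = P3 (d-1) (int n)"
begin

lemma C_prop:
  assumes q: "q < length lams"
  shows "E_map d (symm (lams!q)) = (\<lambda>m. \<Sum>p<length mus. (Cmat d lams mus :: 'b::comm_ring_1 mat) $$ (p,q) * symm (mus!p) m)"
proof
  fix m
  have "lams!q \<in> P3 (d-1) (int (Suc n))" using q sl nth_mem by blast
  then have "good d n (E_map d (symm (lams!q)) :: mono3 \<Rightarrow> 'b)"
    by (intro good_E good_symm d1)
  then have "E_map d (symm (lams!q)) m = (\<Sum>p<length mus. E_map d (symm (lams!q)) (mus!p) * (symm (mus!p) m :: 'b))"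
    by (rule decomp[OF _ dm sm])
  also have "\<dots> = (\<Sum>p<length mus. (Cmat d lams mus :: 'b mat) $$ (p,q) * symm (mus!p) m)"
    by (rule sum.cong) (use q in \<open>auto simp: Cmat_def\<close>)
  finally show "E_map d (symm (lams!q)) m = (\<Sum>p<length mus. (Cmat d lams mus :: 'b mat) $$ (p,q) * symm (mus!p) m)" .
qed

lemma F_prop:
  assumes p: "p < length mus"
  shows "F_map d (symm (mus!p)) = (\<lambda>m. \<Sum>q<length lams. (Gmat d lams mus :: 'b::comm_ring_1 mat) $$ (q,p) * symm (lams!q) m)"
proof
  fix m
  have "mus!p \<in> P3 (d-1) (int n)" using p sm nth_mem by blast
  then have "good d (Suc n) (F_map d (symm (mus!p)) :: mono3 \<Rightarrow> 'b)"
    by (intro good_F good_symm d1)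
  then have "F_map d (symm (mus!p)) m = (\<Sum>q<length lams. F_map d (symm (mus!p)) (lams!q) * (symm (lams!q) m :: 'b))"
    by (rule decomp[OF _ dl sl])
  also have "\<dots> = (\<Sum>q<length lams. (Gmat d lams mus :: 'b mat) $$ (q,p) * symm (lams!q) m)"
    by (rule sum.cong) (use p in \<open>auto simp: Gmat_def\<close>)
  finally show "F_map d (symm (mus!p)) m = (\<Sum>q<length lams. (Gmat d lams mus :: 'b mat) $$ (q,p) * symm (lams!q) m)" .
qed

lemma CG_eq: "(Cmat d lams mus :: 'b::comm_ring_1 mat) * Gmat d lams mus = Mmat d mus"
proof (rule eq_matI)
  fix i j assume i: "i < dim_row (Mmat d mus :: 'b mat)" and j: "j < dim_col (Mmat d mus :: 'b mat)"
  then have i': "i < length mus" and j': "j < length mus" by (auto simp: Mmat_def)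
  have "(Mmat d mus :: 'b mat) $$ (i,j) = E_map d (F_map d (symm (mus!j))) (mus!i)"
    using i' j' by (simp add: Mmat_def)
  also have "\<dots> = E_map d (\<lambda>m. \<Sum>q<length lams. (Gmat d lams mus :: 'b mat) $$ (q,j) * symm (lams!q) m) (mus!i)"
    by (simp only: F_prop[OF j'])
  also have "\<dots> = (\<Sum>q<length lams. (Gmat d lams mus :: 'b mat) $$ (q,j) * E_map d (symm (lams!q)) (mus!i))"
    by (rule E_lin)
  also have "\<dots> = (\<Sum>q<length lams. (Cmat d lams mus :: 'b mat) $$ (i,q) * (Gmat d lams mus :: 'b mat) $$ (q,j))"
    by (rule sum.cong) (use i' in \<open>auto simp: Cmat_def mult.commute\<close>)
  also have "\<dots> = ((Cmat d lams mus :: 'b mat) * Gmat d lams mus) $$ (i,j)"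
    using i' j' by (simp add: Cmat_def Gmat_def scalar_prod_def lessThan_atLeast0)
  finally show "((Cmat d lams mus :: 'b mat) * Gmat d lams mus) $$ (i,j) = (Mmat d mus :: 'b mat) $$ (i,j)" by simp
qed (auto simp: Cmat_def Gmat_def Mmat_def)

lemma uniq:
  fixes C :: "'b::comm_ring_1 mat"
  assumes C: "C \<in> carrier_mat (length mus) (length lams)"
    and h: "\<forall>q < length lams. E_map d (symm (lams ! q)) = (\<lambda>m. \<Sum>p < length mus. C $$ (p, q) * symm (mus ! p) m)"
  shows "C = Cmat d lams mus"
proof (rule eq_matI)
  fix i q assume i: "i < dim_row (Cmat d lams mus :: 'b mat)" and q: "q < dim_col (Cmat d lams mus :: 'b mat)"
  then have i': "i < length mus" and q': "q < length lams" by (auto simp: Cmat_def)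
  have "(Cmat d lams mus :: 'b mat) $$ (i,q) = E_map d (symm (lams!q)) (mus!i)"
    using i' q' by (simp add: Cmat_def)
  also have "\<dots> = (\<Sum>p < length mus. C $$ (p, q) * symm (mus ! p) (mus!i))"
    using h q' by simp
  also have "\<dots> = C $$ (i,q)"
    by (rule eval_nth[OF dm _ i']) (use sm in auto)
  finally show "C $$ (i,q) = (Cmat d lams mus :: 'b mat) $$ (i,q)" by simp
qed (use C in \<open>auto simp: Cmat_def\<close>)

lemma M_of_int: "(Mmat d mus :: 'b::comm_ring_1 mat) = map_mat of_int (Mmat d mus)"
proof -
  have s: "\<And>lam. (symm lam :: mono3 \<Rightarrow> 'b) = (\<lambda>x. of_int (symm lam x))"
    using symm_of_int by blast
  have e: "\<And>lam m. (E_map d (F_map d (symm lam)) m :: 'b) = of_int (E_map d (F_map d (symm lam)) m)"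
  proof -
    fix lam m
    have "(F_map d (symm lam) :: mono3 \<Rightarrow> 'b) = (\<lambda>x. of_int (F_map d (symm lam) x))"
      by (subst s) (rule ext, rule F_of_int)
    then show "(E_map d (F_map d (symm lam)) m :: 'b) = of_int (E_map d (F_map d (symm lam)) m)"
      by (simp add: E_of_int)
  qed
  show ?thesis by (rule eq_matI) (auto simp: Mmat_def e)
qed

lemma det_real:
  assumes hk: "2*n < 3*(d-1)"
  shows "det (Mmat d mus :: real mat) \<noteq> 0"
proof
  let ?s = "length mus"
  assume "det (Mmat d mus :: real mat) = 0"
  then obtain v where v: "v \<in> carrier_vec ?s" "v \<noteq> 0\<^sub>v ?s" and Mv: "(Mmat d mus :: real mat) *\<^sub>v v = 0\<^sub>v ?s"
    using det_0_iff_vec_prod_zero_field[of "Mmat d mus :: real mat" ?s] by (auto simp: Mmat_def)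
  define g :: "mono3 \<Rightarrow> real" where "g = (\<lambda>m. \<Sum>p<?s. v$p * symm (mus!p) m)"
  have symg: "\<And>p. p < ?s \<Longrightarrow> good d n (symm (mus!p) :: mono3 \<Rightarrow> real)"
    using sm d1 by (intro good_symm) auto
  have gg: "good d n g" unfolding g_def by (rule good_lin) (use symg in auto)
  have Fg: "F_map d g = (\<lambda>m. \<Sum>p<?s. v$p * F_map d (symm (mus!p)) m)"
    unfolding g_def by (rule ext, rule F_lin)
  have at: "E_map d (F_map d g) (mus!p') = 0" if p': "p' < ?s" for p'
  proof -
    have "E_map d (F_map d g) (mus!p') = (\<Sum>p<?s. v$p * E_map d (F_map d (symm (mus!p))) (mus!p'))"
      unfolding Fg by (rule E_lin)
    also have "\<dots> = ((Mmat d mus :: real mat) *\<^sub>v v) $ p'"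
      using p' v by (simp add: Mmat_def scalar_prod_def lessThan_atLeast0 mult.commute)
    also have "\<dots> = 0" using Mv p' by simp
    finally show ?thesis .
  qed
  have gEF: "good d n (E_map d (F_map d g))" by (intro good_E good_F gg)
  have EF0: "E_map d (F_map d g) m = 0" for m
  proof -
    have "E_map d (F_map d g) m = (\<Sum>p<?s. E_map d (F_map d g) (mus!p) * symm (mus!p) m)"
      by (rule decomp[OF gEF dm sm])
    also have "\<dots> = 0" using at by simp
    finally show ?thesis .
  qed
  have g0: "g m = 0" for m
    by (rule key[of d n g]) (use gg hk EF0 in \<open>auto simp: good_def\<close>)
  have "v = 0\<^sub>v ?s"
  proof (rule eq_vecI)
    fix p assume "p < dim_vec (0\<^sub>v ?s :: real vec)"
    then have p: "p < ?s" by simp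
    have "v $ p = g (mus!p)" unfolding g_def
      by (rule eval_nth[symmetric, OF dm _ p]) (use sm in auto)
    then show "v $ p = 0\<^sub>v ?s $ p" using g0 p by simp
  qed (use v in auto)
  with v show False by simp
qed

lemma det_any:
  assumes hk: "2*n < 3*(d-1)"
  shows "det (Mmat d mus :: 'a::field_char_0 mat) \<noteq> 0"
proof -
  have "det (Mmat d mus :: real mat) = of_int (det (Mmat d mus :: int mat))"
    by (subst M_of_int) simp
  then have "det (Mmat d mus :: int mat) \<noteq> 0" using det_real[OF hk] by auto
  moreover have "det (Mmat d mus :: 'a mat) = of_int (det (Mmat d mus :: int mat))"
    by (subst M_of_int) simp
  ultimately show ?thesis by simp
qed

end

theorem lemma3p3:
  fixes d :: nat and j :: int and lams mus :: "mono3 list"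
  assumes alg_closed: "\<And>q :: 'a::field_char_0 poly. degree q > 0 \<Longrightarrow> \<exists>x. poly q x = 0"
    and d3: "d \<ge> 3"
    and j_lo: "int d \<le> j"
    and j_hi: "j \<le> \<lfloor>3 * (real d - 1) / 2\<rfloor>"
    and lams: "distinct lams" "set lams = P3 (d - 1) j"
    and mus: "distinct mus" "set mus = P3 (d - 1) (j - 1)"
  defines "t \<equiv> length lams"
    and "s \<equiv> length mus"
  shows "(\<exists>C :: 'a mat. C \<in> carrier_mat s t \<and>
            (\<forall>q < t. E_map d (symm (lams ! q)) = (\<lambda>m. \<Sum>p < s. C $$ (p, q) * symm (mus ! p) m)))
       \<and> (\<forall>C :: 'a mat. C \<in> carrier_mat s t \<and>
            (\<forall>q < t. E_map d (symm (lams ! q)) = (\<lambda>m. \<Sum>p < s. C $$ (p, q) * symm (mus ! p) m))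
            \<longrightarrow> vec_space.rank s C = s \<and> s = p3 (d - 1) (j - 1))"
proof -
  obtain J where J: "j = int J" using j_lo d3 by (metis nonneg_int_cases of_nat_0_le_iff order_trans)
  have Jd: "J \<ge> d" using j_lo J by simp
  define n where "n = J - 1"
  have SJ: "Suc n = J" using Jd d3 n_def by simp
  have "real_of_int j \<le> 3 * (real d - 1) / 2" using j_hi by (simp add: le_floor_iff)
  then have "2 * real J \<le> 3 * (real d - 1)" using J by simp
  then have "2 * J \<le> 3 * (d - 1)" using d3 by (simp add: of_nat_diff)
  then have hk: "2 * n < 3 * (d - 1)" using SJ by simp
  have P1: "P3 (d - 1) j = P3 (d - 1) (int (Suc n))" using J SJ by simp
  have P0: "P3 (d - 1) (j - 1) = P3 (d - 1) (int n)" using J SJ by (simp add: of_nat_diff n_def)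
  interpret S: setup3 d n lams mus
    by unfold_locales (use d3 lams mus P1 P0 in auto)
  have ex: "(Cmat d lams mus :: 'a mat) \<in> carrier_mat s t \<and>
            (\<forall>q < t. E_map d (symm (lams ! q)) = (\<lambda>m. \<Sum>p < s. (Cmat d lams mus :: 'a mat) $$ (p, q) * symm (mus ! p) m))"
    using S.C_prop unfolding s_def t_def by (auto simp: Cmat_def)
  have all: "vec_space.rank s C = s \<and> s = p3 (d - 1) (j - 1)"
    if C: "C \<in> carrier_mat s t"
      and h: "\<forall>q < t. E_map d (symm (lams ! q)) = (\<lambda>m. \<Sum>p < s. C $$ (p, q) * symm (mus ! p) m)"
    for C :: "'a mat"
  proof -
    have CC: "C = Cmat d lams mus" using S.uniq[of C] C h unfolding s_def t_def by blast
    have G: "(Gmat d lams mus :: 'a mat) \<in> carrier_mat t s" unfolding s_def t_def by (simp add: Gmat_def)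
    have "det (C * Gmat d lams mus) \<noteq> 0"
      unfolding CC S.CG_eq using S.det_any[OF hk] .
    then have "vec_space.rank s C = s" using vec_space.rank_full[OF C G] by blast
    moreover have "s = p3 (d - 1) (j - 1)"
      unfolding p3_def s_def using mus distinct_card by metis
    ultimately show ?thesis by simp
  qed
  show ?thesis using ex all by blast
qed

end
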